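(* Let $G$ and $H$ be graphs such that the direct product $G\times H$ is a balanced distance magic graph, and let $\ell$ be a balanced distance magic labeling of $G\times H$ in which $(g,h)$ and $(g',h')$ are twins, where $g\neq g'$ and $h\neq h'$. Let $\widehat\ell$ be obtained from $\ell$ by exchanging the labels of $(g',h')$ and $(g',h)$, i.e. $\widehat\ell(g',h)=\ell(g',h')$, $\widehat\ell(g',h')=\ell(g',h)$, and $\widehat\ell(a,b)=\ell(a,b)$ for all other vertices. Then $\widehat\ell$ is a balanced distance magic labeling of $G\times H$ in which $(g,h)$ and $(g',h)$ are twins.
   Context: All graphs are finite and simple. For a graph $G$ and vertex $x$, $N(x)=N_G(x)$ is the (open) neighborhood of $x$. A distance magic labeling of a graph $G$ of order $N$ is a bijection $\ell\colon V(G)\to\{1,\dots,N\}$ for which there is a constant $k$ such that the weight $w(x)=\sum_{y\in N(x)}\ell(y)$ equals $k$ for every $x\in V(G)$. A balanced distance magic labeling of a graph $G$ with an even number $N$ of vertices is a distance magic labeling $\ell$ such that for every $w\in V(G)$: whenever $u\in N(w)$ has $\ell(u)=i$, there is $v\in N(w)$ with $\ell(v)=N+1-i$. Under such $\ell$, the vertices labeled $i$ and $N+1-i$ are called twins (with respect to $\ell$). $G$ is a balanced distance magic graph if it has an even number of vertices and admits a balanced distance magic labeling. The direct product $G\times H$ has vertex set $V(G)\times V(H)$, with $(g,h)$ adjacent to $(g',h')$ iff $gg'\in E(G)$ and $hh'\in E(H)$. *)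

theory Defs
  imports Main
begin

definition graph :: "'a set \<Rightarrow> ('a \<Rightarrow> 'a \<Rightarrow> bool) \<Rightarrow> bool" where
  "graph V E \<longleftrightarrow> finite V \<and> (\<forall>x y. E x y \<longrightarrow> x \<in> V \<and> y \<in> V)
     \<and> (\<forall>x y. E x y \<longrightarrow> E y x) \<and> (\<forall>x. \<not> E x x)"

definition nbhd :: "'a set \<Rightarrow> ('a \<Rightarrow> 'a \<Rightarrow> bool) \<Rightarrow> 'a \<Rightarrow> 'a set" where
  "nbhd V E x = {y \<in> V. E x y}"

definition distance_magic_labeling ::
  "'a set \<Rightarrow> ('a \<Rightarrow> 'a \<Rightarrow> bool) \<Rightarrow> ('a \<Rightarrow> nat) \<Rightarrow> bool" where
  "distance_magic_labeling V E l \<longleftrightarrow>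
     bij_betw l V {1..card V} \<and> (\<exists>k. \<forall>x\<in>V. (\<Sum>y\<in>nbhd V E x. l y) = k)"

definition balanced_dm_labeling ::
  "'a set \<Rightarrow> ('a \<Rightarrow> 'a \<Rightarrow> bool) \<Rightarrow> ('a \<Rightarrow> nat) \<Rightarrow> bool" where
  "balanced_dm_labeling V E l \<longleftrightarrow> even (card V) \<and> distance_magic_labeling V E l \<and>
     (\<forall>w\<in>V. \<forall>u\<in>nbhd V E w. \<exists>v\<in>nbhd V E w. l v = card V + 1 - l u)"

definition balanced_dm_graph :: "'a set \<Rightarrow> ('a \<Rightarrow> 'a \<Rightarrow> bool) \<Rightarrow> bool" where
  "balanced_dm_graph V E \<longleftrightarrow> even (card V) \<and> (\<exists>l. balanced_dm_labeling V E l)"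

definition twins :: "'a set \<Rightarrow> ('a \<Rightarrow> nat) \<Rightarrow> 'a \<Rightarrow> 'a \<Rightarrow> bool" where
  "twins V l x y \<longleftrightarrow> x \<in> V \<and> y \<in> V \<and> l y = card V + 1 - l x"

definition dprod_V :: "'a set \<Rightarrow> 'b set \<Rightarrow> ('a \<times> 'b) set" where
  "dprod_V VG VH = VG \<times> VH"

definition dprod_E :: "('a \<Rightarrow> 'a \<Rightarrow> bool) \<Rightarrow> ('b \<Rightarrow> 'b \<Rightarrow> bool) \<Rightarrow> ('a \<times> 'b) \<Rightarrow> ('a \<times> 'b) \<Rightarrow> bool" where
  "dprod_E EG EH p q \<longleftrightarrow> EG (fst p) (fst q) \<and> EH (snd p) (snd q)"

end

theory Submission
  imports Defs
begin

theorem lemma1: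
  fixes VG :: "'a set" and EG :: "'a \<Rightarrow> 'a \<Rightarrow> bool"
    and VH :: "'b set" and EH :: "'b \<Rightarrow> 'b \<Rightarrow> bool"
    and l :: "'a \<times> 'b \<Rightarrow> nat"
  assumes "graph VG EG" and "graph VH EH"
    and "balanced_dm_graph (dprod_V VG VH) (dprod_E EG EH)"
    and "balanced_dm_labeling (dprod_V VG VH) (dprod_E EG EH) l"
    and "twins (dprod_V VG VH) l (g, h) (g', h')"
    and "g \<noteq> g'" and "h \<noteq> h'"
  shows "balanced_dm_labeling (dprod_V VG VH) (dprod_E EG EH)
           (l((g', h) := l (g', h'), (g', h') := l (g', h)))
       \<and> twins (dprod_V VG VH) (l((g', h) := l (g', h'), (g', h') := l (g', h))) (g, h) (g', h)"
proof -
  define V where "V = dprod_V VG VH"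
  define E where "E = dprod_E EG EH"
  define N where "N = card V"
  define x where "x = (g, h)"
  define y where "y = (g', h')"
  define p where "p = (g', h)"
  define q where "q = (g', h')"
  have GG: "finite VG" "\<And>a b. EG a b \<Longrightarrow> a \<in> VG \<and> b \<in> VG" "\<And>a b. EG a b \<Longrightarrow> EG b a"
    using assms(1) unfolding graph_def by auto
  have HH: "finite VH" "\<And>a b. EH a b \<Longrightarrow> a \<in> VH \<and> b \<in> VH" "\<And>a b. EH a b \<Longrightarrow> EH b a"
    using assms(2) unfolding graph_def by auto
  have Esym: "\<And>u v. E u v \<Longrightarrow> E v u" using GG(3) HH(3) unfolding E_def dprod_E_def by blast
  have EV: "\<And>u v. E u v \<Longrightarrow> u \<in> V \<and> v \<in> V" using GG(2) HH(2)
    by (auto simp: E_def dprod_E_def V_def dprod_V_def mem_Times_iff)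
  have finV: "finite V" using GG(1) HH(1) by (simp add: V_def dprod_V_def)
  have bal: "even N" "bij_betw l V {1..N}" "\<exists>k. \<forall>z\<in>V. (\<Sum>y\<in>nbhd V E z. l y) = k"
    "\<And>w u. w \<in> V \<Longrightarrow> u \<in> nbhd V E w \<Longrightarrow> \<exists>v\<in>nbhd V E w. l v = N + 1 - l u"
    using assms(4) unfolding balanced_dm_labeling_def distance_magic_labeling_def
      V_def[symmetric] E_def[symmetric] N_def[symmetric] by auto
  obtain k where k: "\<And>z. z \<in> V \<Longrightarrow> (\<Sum>y\<in>nbhd V E z. l y) = k" using bal(3) by blast
  have tw: "x \<in> V" "y \<in> V" "l y = N + 1 - l x"
    using assms(5) unfolding twins_def V_def[symmetric] N_def[symmetric] x_def y_def by auto
  have injl: "inj_on l V" using bal(2) bij_betw_def by blast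
  have lrange: "\<And>z. z \<in> V \<Longrightarrow> l z \<in> {1..N}" using bal(2) bij_betwE by blast
  have lx: "1 \<le> l x" "l x \<le> N" using lrange[OF tw(1)] by auto
  have pV: "p \<in> V" and qV: "q \<in> V" using tw unfolding x_def y_def p_def q_def V_def dprod_V_def by auto
  have pq: "p \<noteq> q" using assms(7) by (simp add: p_def q_def)
  have xy: "E w x \<longleftrightarrow> E w y" if wV0: "w \<in> V" for w
  proof
    assume "E w x"
    then have "x \<in> nbhd V E w" using tw by (simp add: nbhd_def)
    then obtain v where v: "v \<in> nbhd V E w" "l v = N + 1 - l x" using bal(4)[OF wV0] by blast
    have "v = y" using injl v tw by (auto simp: nbhd_def inj_on_def)
    then show "E w y" using v by (simp add: nbhd_def)
  next
    assume "E w y"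
    then have "y \<in> nbhd V E w" using tw by (simp add: nbhd_def)
    then obtain v where v: "v \<in> nbhd V E w" "l v = N + 1 - l y" using bal(4)[OF wV0] by blast
    have "l v = l x" using v tw lx by simp
    then have "v = x" using injl v tw by (auto simp: nbhd_def inj_on_def)
    then show "E w x" using v by (simp add: nbhd_def)
  qed
  have xy2: "E x w \<longleftrightarrow> E y w" for w
    using xy[of w] Esym EV by blast
  have pq2: "E w p \<longleftrightarrow> E w q" for w
  proof
    assume "E w p"
    obtain a b where w: "w = (a, b)" by (cases w)
    have ab: "EG g' a" "EH h b" using \<open>E w p\<close> w GG(3) HH(3) unfolding E_def dprod_E_def p_def by auto
    have wV: "w \<in> V" using EV \<open>E w p\<close> by blast
    have "nbhd V E x \<noteq> {}"
    proof
      assume emp: "nbhd V E x = {}"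
      have "k = 0" using k[OF tw(1)] emp by simp
      moreover have "w \<in> nbhd V E p" using wV Esym[OF \<open>E w p\<close>] pV by (simp add: nbhd_def)
      moreover have "finite (nbhd V E p)" using finV by (simp add: nbhd_def)
      ultimately have "l w \<le> 0" using k[OF pV] member_le_sum[of w "nbhd V E p" l] by simp
      then show False using lrange[OF wV] by simp
    qed
    then obtain c d where cd: "E x (c, d)" by (auto simp: nbhd_def)
    have "E y (c, d)" using cd xy2 by blast
    then have "EG g' c" "EH h' d" by (auto simp: E_def dprod_E_def y_def)
    then have "E y (a, d)" using ab GG(3)[of g' a] by (auto simp: E_def dprod_E_def y_def)
    then have "E x (a, d)" using xy2 by blast
    then have "EG g a" by (auto simp: E_def dprod_E_def x_def)
    then have "E x (a, b)" using ab by (auto simp: E_def dprod_E_def x_def)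
    then have "E y (a, b)" using xy2 by blast
    then show "E w q" using w Esym[of y w] by (simp add: y_def q_def)
  next
    assume "E w q"
    then have "E y w" using Esym[of w q] by (simp add: y_def q_def)
    then have "E x w" using xy2 by blast
    then show "E w p" using \<open>E w q\<close>
    proof -
      obtain a b where w: "w = (a, b)" by (cases w)
      have "EH h b" "EG a g'" using \<open>E x w\<close> \<open>E w q\<close> w by (auto simp: E_def dprod_E_def x_def q_def)
      then show ?thesis using w HH(3)[of h b] by (simp add: E_def dprod_E_def p_def)
    qed
  qed
  define \<sigma> where "\<sigma> z = (if z = p then q else if z = q then p else z)" for z
  have l': "l(p := l q, q := l p) = l \<circ> \<sigma>" using pq by (auto simp: \<sigma>_def)
  have ss: "\<sigma> (\<sigma> z) = z" for z by (auto simp: \<sigma>_def)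
  have injs: "inj_on \<sigma> A" for A by (metis ss inj_onI)
  have nb: "\<sigma> ` nbhd V E w = nbhd V E w" for w
  proof -
    have "z \<in> nbhd V E w \<Longrightarrow> \<sigma> z \<in> nbhd V E w" for z
    proof -
      assume z: "z \<in> nbhd V E w"
      then have zz: "z \<in> V" "E w z" by (auto simp: nbhd_def)
      show "\<sigma> z \<in> nbhd V E w"
      proof (cases "z = p")
        case True
        then have "E w q" using zz pq2[of w] by simp
        then show ?thesis using True qV by (simp add: \<sigma>_def nbhd_def)
      next
        case False
        show ?thesis
        proof (cases "z = q")
          case True
          then have "E w p" using zz pq2[of w] by simp
          then show ?thesis using True pV pq by (simp add: \<sigma>_def nbhd_def)
        next
          case False
          then show ?thesis using \<open>z \<noteq> p\<close> z by (simp add: \<sigma>_def)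
        qed
      qed
    qed
    moreover have "z \<in> nbhd V E w \<Longrightarrow> z \<in> \<sigma> ` nbhd V E w" for z
      using calculation[of z] ss[of z] by (metis image_eqI)
    ultimately show ?thesis by blast
  qed
  have sV1: "z \<in> V \<Longrightarrow> \<sigma> z \<in> V" for z using pV qV by (simp add: \<sigma>_def)
  have sV: "\<sigma> ` V = V"
  proof -
    have "z \<in> V \<Longrightarrow> z \<in> \<sigma> ` V" for z
      using sV1[of z] ss[of z] by (metis image_eqI)
    then show ?thesis using sV1 by blast
  qed
  have bij2: "bij_betw (l \<circ> \<sigma>) V {1..N}"
    using bij_betw_trans[of \<sigma> V V l "{1..N}"] injs sV bal(2) by (simp add: bij_betw_def)
  have wt: "(\<Sum>z\<in>nbhd V E w. (l \<circ> \<sigma>) z) = (\<Sum>z\<in>nbhd V E w. l z)" for w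
    using sum.reindex[OF injs[of "nbhd V E w"], of l] nb by simp
  have balL: "balanced_dm_labeling V E (l \<circ> \<sigma>)"
    unfolding balanced_dm_labeling_def distance_magic_labeling_def N_def[symmetric]
  proof (intro conjI ballI)
    show "even N" by (rule bal(1))
    show "bij_betw (l \<circ> \<sigma>) V {1..N}" by (rule bij2)
    show "\<exists>k. \<forall>z\<in>V. (\<Sum>y\<in>nbhd V E z. (l \<circ> \<sigma>) y) = k" using k wt by metis
  next
    fix w u assume w: "w \<in> V" and u: "u \<in> nbhd V E w"
    have "\<sigma> u \<in> nbhd V E w" using u nb by blast
    then obtain v where v: "v \<in> nbhd V E w" "l v = N + 1 - l (\<sigma> u)" using bal(4)[OF w] by blast
    have "\<sigma> v \<in> nbhd V E w" using v nb by blast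
    moreover have "(l \<circ> \<sigma>) (\<sigma> v) = N + 1 - (l \<circ> \<sigma>) u" using v ss by simp
    ultimately show "\<exists>v\<in>nbhd V E w. (l \<circ> \<sigma>) v = N + 1 - (l \<circ> \<sigma>) u" by blast
  qed
  have twL: "twins V (l \<circ> \<sigma>) x p"
  proof -
    have "x \<noteq> p" "x \<noteq> q" using assms(6) by (auto simp: x_def p_def q_def)
    then have "\<sigma> x = x" "\<sigma> p = q" by (auto simp: \<sigma>_def)
    then show ?thesis using tw pV unfolding twins_def N_def[symmetric] by (simp add: y_def q_def)
  qed
  show ?thesis using balL twL l'
    unfolding V_def E_def x_def p_def q_def by simp
qed

end
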